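(* Let $n_1,n_2$ be distinct odd primes with $\gcd(n_1-1,n_2-1)=6$, $n=n_1n_2$, and let $D_0,\dots,D_5$ be the Whiteman generalized cyclotomic classes of order 6 modulo $n$ (see context). Let $q$ be a prime power with $\gcd(q,n)=1$, let $m$ be the order of $q$ modulo $n$, $\alpha$ a primitive element of $\mathrm{GF}(q^m)$ and $\beta=\alpha^{(q^m-1)/n}$. Let $N_1=\{n_1,\dots,(n_2-1)n_1\}$ and $S(x)=\sum_{i\in N_1\cup D_0\cup D_1\cup D_2}x^i$, $T(x)=\sum_{i\in N_1\cup D_1\cup D_2\cup D_3}x^i$, $M(x)=\sum_{i\in N_1\cup D_2\cup D_3\cup D_4}x^i$ in $\mathrm{GF}(q)[x]$. Then: (I) if $q\bmod n\in D_1\cup D_3\cup D_5$, then $S(\beta),T(\beta),M(\beta)\notin\{-1,0\}$; (II) if $q\bmod n\in D_0$, then $S(\beta)^q=S(\beta)$, $T(\beta)^q=T(\beta)$, $M(\beta)^q=M(\beta)$; (III) if $q\bmod n\in D_2\cup D_4$, then $S(\beta)^{q^3}=S(\beta)$, $T(\beta)^{q^3}=T(\beta)$, $M(\beta)^{q^3}=M(\beta)$.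
   Context: Let $e=(n_1-1)(n_2-1)/6$, $g$ a common primitive root of $n_1$ and $n_2$, $u$ an integer with $u\equiv g\pmod{n_1}$, $u\equiv 1\pmod{n_2}$, and $D_i=\{g^su^i\bmod n: s=0,\dots,e-1\}$ for $i=0,\dots,5$; these partition $\mathbb{Z}_n^*$. *)

theory Defs
  imports "HOL-Number_Theory.Number_Theory"
begin

text \<open>Whiteman generalized cyclotomic class D_i of order 6 modulo n = n1*n2,
  with e = (n1-1)(n2-1)/6, common primitive root g, and u with u = g mod n1, u = 1 mod n2.\<close>
definition whiteman_class :: "nat \<Rightarrow> nat \<Rightarrow> nat \<Rightarrow> nat \<Rightarrow> nat \<Rightarrow> nat set" where
  "whiteman_class n1 n2 g u i =
     {(g ^ s * u ^ i) mod (n1 * n2) | s. s < (n1 - 1) * (n2 - 1) div 6}"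

definition primitive_element :: "'a::{field,finite} \<Rightarrow> bool" where
  "primitive_element a \<longleftrightarrow> a \<noteq> 0 \<and> (\<forall>x. x \<noteq> 0 \<longrightarrow> (\<exists>k::nat. x = a ^ k))"

definition prime_power :: "nat \<Rightarrow> bool" where
  "prime_power q \<longleftrightarrow> (\<exists>p k. prime p \<and> k > 0 \<and> q = p ^ k)"

definition set_poly_eval :: "nat set \<Rightarrow> 'a::comm_ring_1 \<Rightarrow> 'a" where
  "set_poly_eval A x = (\<Sum>i\<in>A. x ^ i)"

end

theory Submission imports Defs begin


lemma ff_pow_card: "(x::'a::{field,finite}) ^ card (UNIV :: 'a set) = x"
proof (cases "x = 0")
  case False
  have "x * (\<Prod>y\<in>UNIV-{0}. x * y) = x * x ^ (card (UNIV :: 'a set) - 1) * \<Prod>(UNIV-{0})"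
    by (simp add: prod.distrib mult_ac)
  also have "x * x ^ (card (UNIV :: 'a set) - 1) = x ^ Suc (card (UNIV :: 'a set) - 1)"
    by (subst power_Suc) auto
  also have "Suc (card (UNIV :: 'a set) - 1) = card (UNIV :: 'a set)"
    using finite_UNIV_card_ge_0[where ?'a = 'a] by simp
  also have "(\<Prod>y\<in>UNIV-{0}. x * y) = (\<Prod>y\<in>UNIV-{0}. y)"
    by (rule prod.reindex_bij_witness[of _ "\<lambda>y. y / x" "\<lambda>y. x * y"]) (use False in auto)
  finally show ?thesis
    by simp
qed (use finite_UNIV_card_ge_0[where ?'a = 'a] in auto)

lemma ff_pow_card1: "(x::'a::{field,finite}) \<noteq> 0 \<Longrightarrow> x ^ (card (UNIV :: 'a set) - 1) = 1"
proof -
  assume x: "x \<noteq> 0"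
  have "x * x ^ (card (UNIV :: 'a set) - 1) = x ^ Suc (card (UNIV :: 'a set) - 1)" by simp
  also have "Suc (card (UNIV :: 'a set) - 1) = card (UNIV :: 'a set)"
    using finite_UNIV_card_ge_0[where ?'a = 'a] by simp
  finally have "x * x ^ (card (UNIV :: 'a set) - 1) = x * 1" using ff_pow_card by simp
  thus ?thesis using x by simp
qed

lemma ff_card_ge2: "card (UNIV :: 'a::{field,finite} set) \<ge> 2"
proof -
  have "{0::'a, 1} \<subseteq> UNIV" by simp
  hence "card {0::'a, 1} \<le> card (UNIV :: 'a set)" by (intro card_mono) auto
  thus ?thesis by simp
qed

lemma prim_order:
  fixes \<alpha> :: "'a::{field,finite}"
  assumes "primitive_element \<alpha>" "\<alpha> ^ j = 1" "j > 0"
  shows "card (UNIV :: 'a set) - 1 \<le> j"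
proof -
  have "UNIV - {0} \<subseteq> (\<lambda>k. \<alpha> ^ k) ` {..<j}"
  proof
    fix x :: 'a assume "x \<in> UNIV - {0}"
    then obtain k where k: "x = \<alpha> ^ k" using assms(1) unfolding primitive_element_def by auto
    have "\<alpha> ^ k = \<alpha> ^ (j * (k div j) + k mod j)" by (simp only: mult_div_mod_eq)
    also have "\<dots> = (\<alpha> ^ j) ^ (k div j) * \<alpha> ^ (k mod j)" by (simp only: power_add power_mult)
    also have "\<dots> = \<alpha> ^ (k mod j)" by (simp add: assms(2))
    finally show "x \<in> (\<lambda>k. \<alpha> ^ k) ` {..<j}" using k assms(3) by auto
  qed
  hence "card (UNIV - {0::'a}) \<le> card ((\<lambda>k. \<alpha> ^ k) ` {..<j})" by (intro card_mono) auto
  also have "\<dots> \<le> j" using card_image_le[of "{..<j}" "\<lambda>k. \<alpha> ^ k"] by simp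
  finally show ?thesis by (simp add: card_Diff_singleton)
qed

lemma char_pow:
  assumes "prime_power q" "card (UNIV :: 'a::{field,finite} set) = q ^ m" "m > 0"
  shows "\<exists>t. q ^ j = CHAR('a) ^ t"
proof -
  obtain p k where pk: "prime p" "k > 0" "q = p ^ k" using assms(1) unfolding prime_power_def by auto
  have cp: "CHAR('a) > 0" by (rule finite_imp_CHAR_pos) simp
  hence pc: "prime CHAR('a)" by (rule prime_CHAR_semidom)
  have "CHAR('a) dvd p ^ (k*m)" using CHAR_dvd_CARD[where 'a='a] assms(2) pk by (simp add: power_mult)
  hence "CHAR('a) dvd p" by (rule prime_dvd_power[OF pc])
  hence "CHAR('a) = p" by (rule primes_dvd_imp_eq[OF pc pk(1)])
  hence "q ^ j = CHAR('a) ^ (k*j)" using pk by (simp add: power_mult)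
  thus ?thesis by blast
qed

lemma frob_sum:
  assumes "prime_power q" "card (UNIV :: 'a::{field,finite} set) = q ^ m" "m > 0"
  shows "sum (f :: _ \<Rightarrow> 'a) A ^ (q ^ j) = sum (\<lambda>i. f i ^ (q ^ j)) A"
proof -
  obtain t where t: "q ^ j = CHAR('a) ^ t" using char_pow[OF assms] by blast
  have cp: "CHAR('a) > 0" by (rule finite_imp_CHAR_pos) simp
  hence pc: "prime CHAR('a)" by (rule prime_CHAR_semidom)
  show ?thesis unfolding t by (rule freshmans_dream_sum'[OF pc refl])
qed

lemma frob_add:
  assumes "prime_power q" "card (UNIV :: 'a::{field,finite} set) = q ^ m" "m > 0"
  shows "((x::'a) + y) ^ (q ^ j) = x ^ (q ^ j) + y ^ (q ^ j)"
proof -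
  obtain t where t: "q ^ j = CHAR('a) ^ t" using char_pow[OF assms] by blast
  have cp: "CHAR('a) > 0" by (rule finite_imp_CHAR_pos) simp
  hence pc: "prime CHAR('a)" by (rule prime_CHAR_semidom)
  show ?thesis unfolding t by (rule freshmans_dream'[OF pc refl])
qed

lemma geom_m1:
  fixes \<gamma> :: "'a::field"
  assumes "\<gamma> ^ r = 1" "\<gamma> \<noteq> 1" "r > 0"
  shows "(\<Sum>k\<in>{1..r-1}. \<gamma> ^ k) = -1"
proof -
  have "1 - \<gamma> ^ r = (1 - \<gamma>) * (\<Sum>i<r. \<gamma>^i)" by (rule one_diff_power_eq)
  hence z: "(\<Sum>i<r. \<gamma>^i) = 0" using assms by simp
  have "(\<Sum>i<r. \<gamma>^i) = (\<Sum>i\<in>{0..<r}. \<gamma>^i)" by (simp add: atLeast0LessThan)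
  also have "\<dots> = 1 + (\<Sum>i\<in>{Suc 0..<r}. \<gamma>^i)" using assms(3) by (subst sum.atLeast_Suc_lessThan) auto
  also have "{Suc 0..<r} = {1..r-1}" using assms(3) by auto
  finally show ?thesis using z by (simp add: eq_neg_iff_add_eq_0 add.commute)
qed



locale wh =
  fixes n1 n2 g u :: nat
  assumes p1: "prime n1" and p2: "prime n2" and ne: "n1 \<noteq> n2"
    and gcd6: "gcd (n1 - 1) (n2 - 1) = 6"
    and r1: "residue_primroot n1 g" and r2: "residue_primroot n2 g"
    and u1: "[u = g] (mod n1)" and u2: "[u = 1] (mod n2)"
begin

definition "e = (n1 - 1) * (n2 - 1) div 6"

lemma six1: "6 dvd n1 - 1" using gcd6 by (metis gcd_dvd1)
lemma six2: "6 dvd n2 - 1" using gcd6 by (metis gcd_dvd2)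
lemma n1ge: "n1 \<ge> 7"
proof -
  have "n1 \<ge> 2" using p1 prime_ge_2_nat by blast
  have "n1 - 1 \<ge> 6" using six1 \<open>n1 \<ge> 2\<close> by (intro dvd_imp_le) auto
  thus ?thesis by simp
qed
lemma n2ge: "n2 \<ge> 7"
proof -
  have "n2 \<ge> 2" using p2 prime_ge_2_nat by blast
  have "n2 - 1 \<ge> 6" using six2 \<open>n2 \<ge> 2\<close> by (intro dvd_imp_le) auto
  thus ?thesis by simp
qed
lemma copr12: "coprime n1 n2" using primes_coprime p1 p2 ne by blast
lemma e_lcm: "e = lcm (n1-1) (n2-1)"
proof -
  have "lcm (n1-1) (n2-1) * 6 = (n1-1)*(n2-1)" by (metis prod_gcd_lcm_nat gcd6 mult.commute)
  thus ?thesis unfolding e_def by (metis nonzero_mult_div_cancel_right zero_neq_numeral)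
qed
lemma e_pos: "e > 0" using n1ge n2ge unfolding e_lcm by (simp add: lcm_pos_nat)
lemma ord1: "ord n1 g = n1 - 1" using r1 p1 by (simp add: residue_primroot_def totient_prime)
lemma ord2: "ord n2 g = n2 - 1" using r2 p2 by (simp add: residue_primroot_def totient_prime)
lemma cg1: "coprime n1 g" using r1 by (simp add: residue_primroot_def)
lemma cg2: "coprime n2 g" using r2 by (simp add: residue_primroot_def)
lemma gpow1: "[g^a = g^b] (mod n1) \<longleftrightarrow> [a = b] (mod (n1-1))"
  using order_divides_expdiff[OF cg1] ord1 by simp
lemma gpow2: "[g^a = g^b] (mod n2) \<longleftrightarrow> [a = b] (mod (n2-1))"
  using order_divides_expdiff[OF cg2] ord2 by simp
lemma cong_n: "[a = b] (mod (n1*n2)) \<longleftrightarrow> [a = b] (mod n1) \<and> [a = b] (mod n2)"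
  using copr12 by (metis cong_modulus_mult_nat coprime_cong_mult_nat mult.commute)
lemma gpow: "[g^a = g^b] (mod (n1*n2)) \<longleftrightarrow> [a = b] (mod e)"
proof
  assume "[g^a = g^b] (mod (n1*n2))"
  thus "[a = b] (mod e)" unfolding e_lcm using cong_n gpow1 gpow2 cong_cong_lcm_nat by blast
next
  assume h: "[a = b] (mod e)"
  have "[a = b] (mod (n1-1))" by (rule cong_dvd_modulus_nat[OF h]) (simp add: e_lcm)
  moreover have "[a = b] (mod (n2-1))" by (rule cong_dvd_modulus_nat[OF h]) (simp add: e_lcm)
  ultimately show "[g^a = g^b] (mod (n1*n2))" using cong_n gpow1 gpow2 by blast
qed
lemma cu1: "coprime u n1"
  using coprime_cong_cong_left[OF u1] cg1 by (simp add: coprime_commute)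
lemma cu2: "coprime u n2"
  using coprime_cong_cong_left[OF u2] by simp
lemma cu: "coprime u (n1*n2)" using cu1 cu2 by simp
lemma cg: "coprime g (n1*n2)" using cg1 cg2 by (simp add: coprime_commute)

lemma u6: "\<exists>w. [u^6 = g^w] (mod (n1*n2))"
proof -
  define a where "a = (n1-1) div 6"
  define b where "b = (n2-1) div 6"
  have na: "n1 - 1 = 6*a" using six1 a_def by auto
  have nb: "n2 - 1 = 6*b" using six2 b_def by auto
  have "6 * gcd b a = gcd (6*b) (6*a)" by (rule gcd_mult_distrib_nat)
  also have "\<dots> = 6" using gcd6 na nb by (simp add: gcd.commute)
  finally have "6 * gcd b a = 6" .
  hence "gcd b a = 1" by linarith
  hence "coprime b a" by (rule coprime_iff_gcd_eq_1[THEN iffD2])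
  from cong_solve_coprime_nat[OF this] obtain k where k0: "[b*k = Suc 0] (mod a)" ..
  have k: "[b*k = 1] (mod a)" using k0 by simp
  define w where "w = (n2-1)*k"
  have "[w = 0] (mod (n2-1))" unfolding w_def by (simp add: cong_0_iff)
  hence "[g^w = g^0] (mod n2)" by (simp only: gpow2)
  hence A1: "[1 = g^w] (mod n2)" by (simp add: cong_sym_eq)
  have "[u^6 = 1^6] (mod n2)" using u2 by (rule cong_pow)
  hence A: "[u^6 = g^w] (mod n2)" using A1 by (simp add: cong_trans)
  have "[6*(b*k) = 6*1] (mod (6*a))" using k by (rule cong_cmult_leftI)
  hence "[w = 6] (mod (n1-1))" using na nb w_def by (simp add: mult.assoc)
  hence B1: "[g^w = g^6] (mod n1)" by (simp only: gpow1)
  have "[u^6 = g^6] (mod n1)" using u1 by (rule cong_pow)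
  hence B: "[u^6 = g^w] (mod n1)" using cong_trans[OF _ cong_sym[OF B1]] by blast
  have "[u^6 = g^w] (mod (n1*n2))" using A B by (simp add: cong_n)
  thus ?thesis by blast
qed

lemma memD: "x \<in> whiteman_class n1 n2 g u i \<longleftrightarrow> (\<exists>s<e. x = (g^s * u^i) mod (n1*n2))"
  by (auto simp: whiteman_class_def e_def)


lemma D_mult:
  assumes x: "x \<in> whiteman_class n1 n2 g u i" and y: "y \<in> whiteman_class n1 n2 g u j"
  shows "(x*y) mod (n1*n2) \<in> whiteman_class n1 n2 g u ((i+j) mod 6)"
proof -
  obtain s where s: "s<e" "x = (g^s * u^i) mod (n1*n2)" using x memD by blast
  obtain t where t: "t<e" "y = (g^t * u^j) mod (n1*n2)" using y memD by blast
  obtain w where w: "[u^6 = g^w] (mod (n1*n2))" using u6 by blast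
  define k where "k = (i+j) div 6"
  define r where "r = (i+j) mod 6"
  have ij: "i+j = 6*k + r" unfolding k_def r_def by simp
  have c1: "[x*y = (g^s * u^i) * (g^t * u^j)] (mod (n1*n2))"
    unfolding s t by (simp add: cong_def mod_mult_eq)
  have e2: "(g^s * u^i) * (g^t * u^j) = g^(s+t) * (u^6)^k * u^r"
  proof -
    have "u^(i+j) = (u^6)^k * u^r" by (simp only: ij power_add power_mult)
    moreover have "(g^s * u^i) * (g^t * u^j) = g^(s+t) * u^(i+j)" by (simp add: power_add algebra_simps)
    ultimately show ?thesis by (simp add: algebra_simps)
  qed
  have c3: "[g^(s+t) * (u^6)^k * u^r = g^(s+t) * (g^w)^k * u^r] (mod (n1*n2))"
    using w by (intro cong_mult cong_refl cong_pow)
  have e4: "g^(s+t) * (g^w)^k = g^(s+t+w*k)" by (simp add: power_add power_mult)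
  have c5: "[g^(s+t+w*k) = g^((s+t+w*k) mod e)] (mod (n1*n2))"
    unfolding gpow by (simp add: cong_def)
  have c6: "[g^(s+t+w*k) * u^r = g^((s+t+w*k) mod e) * u^r] (mod (n1*n2))"
    using c5 by (rule cong_scalar_right)
  have "[x*y = g^(s+t+w*k) * u^r] (mod (n1*n2))"
    using cong_trans[OF c1[unfolded e2] c3] unfolding e4 .
  hence "[x*y = g^((s+t+w*k) mod e) * u^r] (mod (n1*n2))"
    using c6 by (rule cong_trans)
  hence "(x*y) mod (n1*n2) = (g^((s+t+w*k) mod e) * u^r) mod (n1*n2)" by (simp add: cong_def)
  moreover have "(s+t+w*k) mod e < e" using e_pos by simp
  ultimately show ?thesis unfolding memD r_def by blast
qed

lemma D_fin: "finite (whiteman_class n1 n2 g u i)"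
proof -
  have "whiteman_class n1 n2 g u i = (\<lambda>s. (g^s * u^i) mod (n1*n2)) ` {..<e}"
    by (auto simp: memD)
  thus ?thesis by simp
qed

lemma D_card: "card (whiteman_class n1 n2 g u i) = e"
proof -
  have eq: "whiteman_class n1 n2 g u i = (\<lambda>s. (g^s * u^i) mod (n1*n2)) ` {..<e}"
    by (auto simp: memD)
  have "inj_on (\<lambda>s. (g^s * u^i) mod (n1*n2)) {..<e}"
  proof (rule inj_onI)
    fix s t assume st: "s \<in> {..<e}" "t \<in> {..<e}" and h: "(g^s * u^i) mod (n1*n2) = (g^t * u^i) mod (n1*n2)"
    have cui: "coprime (u^i) (n1*n2)" using cu by simp
    have "[g^s * u^i = g^t * u^i] (mod (n1*n2))" using h by (simp add: cong_def)
    hence "[g^s = g^t] (mod (n1*n2))" using cong_mult_rcancel_nat cui by blast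
    hence "[s = t] (mod e)" using gpow by blast
    thus "s = t" using st by (simp add: cong_def)
  qed
  thus ?thesis using eq card_image by fastforce
qed

lemma D_sub: "whiteman_class n1 n2 g u i \<subseteq> totatives (n1*n2)"
proof
  fix x assume "x \<in> whiteman_class n1 n2 g u i"
  then obtain s where x: "x = (g^s * u^i) mod (n1*n2)" using memD by blast
  have "n1*n2 > 1" using n1ge n2ge by (simp add: one_less_mult)
  have "coprime (g^s * u^i) (n1*n2)" using cg cu by (simp only: coprime_mult_left_iff coprime_power_left_iff) simp
  hence c: "coprime x (n1*n2)" unfolding x using n1ge n2ge by (subst coprime_mod_left_iff) auto
  hence "x \<noteq> 0" using \<open>n1*n2>1\<close> by (cases "x = 0") auto
  moreover have "x < n1*n2" unfolding x using n1ge n2ge by (intro mod_less_divisor) simp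
  ultimately show "x \<in> totatives (n1*n2)" using c by (simp add: totatives_def)
qed

lemma D_disj:
  assumes "i < 6" "j < 6" "i \<noteq> j"
  shows "whiteman_class n1 n2 g u i \<inter> whiteman_class n1 n2 g u j = {}"
proof (rule ccontr)
  assume "\<not> ?thesis"
  then obtain x where "x \<in> whiteman_class n1 n2 g u i" "x \<in> whiteman_class n1 n2 g u j" by blast
  then obtain s t where "x = (g^s * u^i) mod (n1*n2)" "x = (g^t * u^j) mod (n1*n2)" using memD by blast
  hence h: "[g^s * u^i = g^t * u^j] (mod (n1*n2))" by (simp add: cong_def)
  hence h1: "[g^s * u^i = g^t * u^j] (mod n1)" and h2: "[g^s * u^i = g^t * u^j] (mod n2)" using cong_n by auto
  have X: "[g^s * u^i = g^s * g^i] (mod n1)" using u1 by (intro cong_mult cong_refl cong_pow)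
  have Y: "[g^t * u^j = g^t * g^j] (mod n1)" using u1 by (intro cong_mult cong_refl cong_pow)
  have "[g^s * g^i = g^t * g^j] (mod n1)" using cong_trans[OF cong_sym[OF X] cong_trans[OF h1 Y]] .
  hence "[g^(s+i) = g^(t+j)] (mod n1)" by (simp add: power_add)
  hence "[s+i = t+j] (mod (n1-1))" using gpow1 by blast
  hence A: "[s+i = t+j] (mod 6)" using six1 cong_dvd_modulus_nat by blast
  have X2: "[g^s * u^i = g^s * 1^i] (mod n2)" using u2 by (intro cong_mult cong_refl cong_pow)
  have Y2: "[g^t * u^j = g^t * 1^j] (mod n2)" using u2 by (intro cong_mult cong_refl cong_pow)
  have "[g^s * 1^i = g^t * 1^j] (mod n2)" using cong_trans[OF cong_sym[OF X2] cong_trans[OF h2 Y2]] .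
  hence "[g^s = g^t] (mod n2)" by simp
  hence "[s = t] (mod (n2-1))" using gpow2 by blast
  hence B: "[s = t] (mod 6)" using six2 cong_dvd_modulus_nat by blast
  have "[s+j = t+j] (mod 6)" using B cong_add_rcancel_nat by blast
  hence "[s+i = s+j] (mod 6)" using A cong_sym cong_trans by blast
  hence "[i = j] (mod 6)" using cong_add_lcancel_nat by blast
  thus False using assms by (simp add: cong_def)
qed


lemma six_set: "{..<6::nat} = {0,1,2,3,4,5}" by auto

lemma D_cover: "totatives (n1*n2) = whiteman_class n1 n2 g u 0 \<union> whiteman_class n1 n2 g u 1 \<union>
   whiteman_class n1 n2 g u 2 \<union> whiteman_class n1 n2 g u 3 \<union> whiteman_class n1 n2 g u 4 \<union> whiteman_class n1 n2 g u 5"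
proof -
  let ?U = "\<Union>i\<in>{..<6::nat}. whiteman_class n1 n2 g u i"
  have sub: "?U \<subseteq> totatives (n1*n2)" using D_sub by blast
  have "card ?U = (\<Sum>i<6. card (whiteman_class n1 n2 g u i))"
    by (rule card_UN_disjoint) (auto simp: D_fin D_disj)
  also have "\<dots> = 6 * e" by (simp add: D_card)
  also have "\<dots> = (n1-1)*(n2-1)" unfolding e_def using six1 by auto
  also have "\<dots> = card (totatives (n1*n2))"
    using totient_mult_coprime[OF copr12] totient_prime[OF p1] totient_prime[OF p2]
    by (simp add: totient_def)
  finally have "?U = totatives (n1*n2)" using sub by (intro card_subset_eq) auto
  thus ?thesis unfolding six_set by auto
qed

lemma mul_inj:
  assumes "coprime c (n1*n2)"
  shows "inj_on (\<lambda>x. (c*x) mod (n1*n2)) {..<n1*n2}"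
proof (rule inj_onI)
  fix x y assume xy: "x \<in> {..<n1*n2}" "y \<in> {..<n1*n2}" and h: "(c*x) mod (n1*n2) = (c*y) mod (n1*n2)"
  have "[c*x = c*y] (mod (n1*n2))" using h by (simp add: cong_def)
  hence "[x = y] (mod (n1*n2))" using cong_mult_lcancel_nat assms by blast
  thus "x = y" using xy by (simp add: cong_def)
qed

lemma D_lt: "whiteman_class n1 n2 g u i \<subseteq> {..<n1*n2}"
proof
  fix x assume "x \<in> whiteman_class n1 n2 g u i"
  then obtain s where x: "x = (g^s * u^i) mod (n1*n2)" using memD by blast
  show "x \<in> {..<n1*n2}" unfolding x using n1ge n2ge by simp
qed

lemma D_img:
  assumes c: "c \<in> whiteman_class n1 n2 g u j"
  shows "(\<lambda>x. (c*x) mod (n1*n2)) ` whiteman_class n1 n2 g u i = whiteman_class n1 n2 g u ((j+i) mod 6)"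
proof -
  have cc: "coprime c (n1*n2)" using c D_sub by (auto simp: totatives_def)
  have inj: "inj_on (\<lambda>x. (c*x) mod (n1*n2)) (whiteman_class n1 n2 g u i)"
    using inj_on_subset[OF mul_inj[OF cc] D_lt] .
  have sub: "(\<lambda>x. (c*x) mod (n1*n2)) ` whiteman_class n1 n2 g u i \<subseteq> whiteman_class n1 n2 g u ((j+i) mod 6)"
    using D_mult[OF c] by blast
  show ?thesis using card_image[OF inj] D_card by (intro card_subset_eq[OF D_fin sub]) simp
qed

definition "N1 = {n1 * k | k. 1 \<le> k \<and> k \<le> n2 - 1}"

lemma N1_eq: "N1 = (\<lambda>k. n1*k) ` {1..n2-1}" unfolding N1_def by auto
lemma N1_fin: "finite N1" unfolding N1_eq by simp
lemma N1_lt: "N1 \<subseteq> {..<n1*n2}"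
proof
  fix x assume "x \<in> N1"
  then obtain k where k: "x = n1*k" "1 \<le> k" "k \<le> n2 - 1" unfolding N1_def by auto
  have "k < n2" using k n2ge by linarith
  thus "x \<in> {..<n1*n2}" using k n1ge by simp
qed

lemma N1_img:
  assumes cc: "coprime c (n1*n2)"
  shows "(\<lambda>x. (c*x) mod (n1*n2)) ` N1 = N1"
proof (rule endo_inj_surj[OF N1_fin])
  show "inj_on (\<lambda>x. (c*x) mod (n1*n2)) N1" using inj_on_subset[OF mul_inj[OF cc] N1_lt] .
  show "(\<lambda>x. (c*x) mod (n1*n2)) ` N1 \<subseteq> N1"
  proof
    fix y assume "y \<in> (\<lambda>x. (c*x) mod (n1*n2)) ` N1"
    then obtain x where x: "x \<in> N1" "y = (c*x) mod (n1*n2)" by blast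
    then obtain k where k: "y = (c*(n1*k)) mod (n1*n2)" "1 \<le> k" "k \<le> n2 - 1" unfolding N1_def by blast
    have "c*(n1*k) = n1*(c*k)" by simp
    hence y: "y = n1 * ((c*k) mod n2)" unfolding k(1) by (simp only: mod_mult_mult1)
    have cn2: "coprime c n2" using cc by simp
    have "\<not> n2 dvd k"
    proof
      assume "n2 dvd k" hence "n2 \<le> k" using k by (intro dvd_imp_le) auto
      thus False using k n2ge by linarith
    qed
    moreover have "\<not> n2 dvd c"
    proof
      assume "n2 dvd c" hence "n2 = 1" by (rule coprime_common_divisor_nat[OF cn2 _ dvd_refl])
      thus False using n2ge by simp
    qed
    moreover have "n2 dvd c*k \<longleftrightarrow> n2 dvd c \<or> n2 dvd k" using p2 by (rule prime_dvd_mult_iff)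
    ultimately have "\<not> n2 dvd c*k" by blast
    hence "(c*k) mod n2 \<noteq> 0" by (simp add: dvd_eq_mod_eq_0)
    moreover have "(c*k) mod n2 < n2" using n2ge by simp
    ultimately have "1 \<le> (c*k) mod n2" "(c*k) mod n2 \<le> n2 - 1" by linarith+
    thus "y \<in> N1" unfolding N1_def y by blast
  qed
qed

lemma N1_tot: "N1 \<inter> totatives (n1*n2) = {}"
proof -
  have "\<not> coprime (n1*k) (n1*n2)" for k using n1ge by auto
  thus ?thesis unfolding N1_def totatives_def by auto
qed

definition "N2 = {n2 * k | k. 1 \<le> k \<and> k \<le> n1 - 1}"

lemma split_units: "{1..<n1*n2} = totatives (n1*n2) \<union> N1 \<union> N2"
proof (intro equalityI subsetI)
  fix x assume x: "x \<in> {1..<n1*n2}"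
  show "x \<in> totatives (n1*n2) \<union> N1 \<union> N2"
  proof (cases "coprime x (n1*n2)")
    case True thus ?thesis using x by (auto simp: totatives_def)
  next
    case False
    hence "\<not> coprime x n1 \<or> \<not> coprime x n2" by auto
    hence "n1 dvd x \<or> n2 dvd x" using p1 p2 prime_imp_coprime[of n1 x] prime_imp_coprime[of n2 x] by (auto simp: coprime_commute)
    thus ?thesis
    proof
      assume "n1 dvd x" then obtain k where k: "x = n1*k" by auto
      have "k \<noteq> 0" "k < n2" using x k by auto
      hence "1 \<le> k" "k \<le> n2 - 1" by linarith+
      thus ?thesis unfolding N1_def using k by auto
    next
      assume "n2 dvd x" then obtain k where k: "x = n2*k" by auto
      have "k \<noteq> 0" "k < n1" using x k by (auto simp: mult.commute[of n1])
      hence "1 \<le> k" "k \<le> n1 - 1" by linarith+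
      thus ?thesis unfolding N2_def using k by auto
    qed
  qed
next
  fix x assume "x \<in> totatives (n1*n2) \<union> N1 \<union> N2"
  thus "x \<in> {1..<n1*n2}"
  proof (elim UnE)
    assume "x \<in> totatives (n1*n2)"
    moreover have "n1*n2 \<notin> totatives (n1*n2)" using n1ge n2ge by (auto simp: totatives_def)
    ultimately have "x \<noteq> n1*n2" by auto
    moreover have "0 < x" "x \<le> n1*n2" using \<open>x \<in> totatives (n1*n2)\<close> by (simp_all add: totatives_def)
    ultimately show ?thesis by simp
  next
    assume "x \<in> N1" thus ?thesis using N1_lt unfolding N1_def by auto
  next
    assume "x \<in> N2"
    then obtain k where k: "x = n2*k" "1 \<le> k" "k \<le> n1 - 1" unfolding N2_def by auto
    have "k < n1" using k n1ge by linarith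
    thus ?thesis using k n2ge by simp
  qed
qed

lemma N2_tot: "N2 \<inter> totatives (n1*n2) = {}"
proof -
  have "\<not> coprime (n2*k) (n1*n2)" for k using n2ge by auto
  thus ?thesis unfolding N2_def totatives_def by auto
qed

lemma N12: "N1 \<inter> N2 = {}"
proof -
  have False if "n1*k = n2*l" "1 \<le> k" "k \<le> n2 - 1" for k l
  proof -
    have "n2 dvd n1*k" using that(1) by simp
    moreover have "\<not> n2 dvd n1"
    proof
      assume "n2 dvd n1" hence "n2 = 1" by (rule coprime_common_divisor_nat[OF copr12 _ dvd_refl])
      thus False using n2ge by simp
    qed
    moreover have "n2 dvd n1*k \<longleftrightarrow> n2 dvd n1 \<or> n2 dvd k" using p2 by (rule prime_dvd_mult_iff)
    ultimately have "n2 dvd k" by blast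
    hence "n2 \<le> k" using that by (intro dvd_imp_le) auto
    thus False using that n2ge by linarith
  qed
  thus ?thesis unfolding N1_def N2_def by auto
qed


abbreviation "DD \<equiv> whiteman_class n1 n2 g u"

lemma N1_D: "N1 \<inter> DD i = {}" "DD i \<inter> N1 = {}" using N1_tot D_sub by blast+

lemma N2_fin: "finite N2"
proof -
  have "N2 = (\<lambda>k. n2*k) ` {1..n1-1}" unfolding N2_def by auto
  thus ?thesis by simp
qed

lemma pow_mod_n: "(\<beta>::'a::comm_ring_1)^(n1*n2) = 1 \<Longrightarrow> \<beta>^k = \<beta>^(k mod (n1*n2))"
proof -
  assume b: "\<beta>^(n1*n2) = 1"
  have "\<beta>^k = \<beta>^((n1*n2) * (k div (n1*n2)) + k mod (n1*n2))" by (simp only: mult_div_mod_eq)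
  also have "\<dots> = (\<beta>^(n1*n2)) ^ (k div (n1*n2)) * \<beta>^(k mod (n1*n2))" by (simp only: power_add power_mult)
  also have "\<dots> = \<beta>^(k mod (n1*n2))" by (simp add: b)
  finally show ?thesis .
qed

lemma frob_img:
  fixes \<beta> :: "'a::comm_ring_1"
  assumes b: "\<beta>^(n1*n2) = 1" and c: "c \<in> DD j" and Qc: "Q mod (n1*n2) = c"
    and fr: "set_poly_eval (N1 \<union> DD a \<union> DD b \<union> DD d) \<beta> ^ Q = (\<Sum>i\<in>N1 \<union> DD a \<union> DD b \<union> DD d. (\<beta>^i)^Q)"
  shows "set_poly_eval (N1 \<union> DD a \<union> DD b \<union> DD d) \<beta> ^ Q
     = set_poly_eval (N1 \<union> DD ((j+a) mod 6) \<union> DD ((j+b) mod 6) \<union> DD ((j+d) mod 6)) \<beta>"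
proof -
  let ?A = "N1 \<union> DD a \<union> DD b \<union> DD d"
  let ?h = "\<lambda>x. (c*x) mod (n1*n2)"
  have cc: "coprime c (n1*n2)" using c D_sub by (auto simp: totatives_def)
  have Asub: "?A \<subseteq> {..<n1*n2}" using N1_lt D_lt by blast
  have inj: "inj_on ?h ?A" using inj_on_subset[OF mul_inj[OF cc] Asub] .
  have img: "?h ` ?A = N1 \<union> DD ((j+a) mod 6) \<union> DD ((j+b) mod 6) \<union> DD ((j+d) mod 6)"
    by (simp only: image_Un N1_img[OF cc] D_img[OF c])
  have "(\<Sum>i\<in>?A. (\<beta>^i)^Q) = (\<Sum>i\<in>?A. \<beta>^(?h i))"
  proof (rule sum.cong[OF refl])
    fix i
    have "(\<beta>^i)^Q = \<beta>^((i*Q) mod (n1*n2))" using pow_mod_n[OF b, of "i*Q"] by (simp add: power_mult)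
    also have "(i*Q) mod (n1*n2) = (c*i) mod (n1*n2)"
      by (metis Qc mod_mult_right_eq mult.commute)
    finally show "(\<beta>^i)^Q = \<beta>^(?h i)" .
  qed
  also have "\<dots> = (\<Sum>y\<in>?h ` ?A. \<beta>^y)" using sum.reindex[OF inj, of "\<lambda>y. \<beta>^y"] by simp
  finally show ?thesis unfolding fr img by (simp add: set_poly_eval_def)
qed

lemma cube:
  assumes "x mod (n1*n2) \<in> DD a"
  shows "(x^3) mod (n1*n2) \<in> DD (((a+a) mod 6 + a) mod 6)"
proof -
  let ?y = "x mod (n1*n2)"
  have "(?y * ?y) mod (n1*n2) \<in> DD ((a+a) mod 6)" using D_mult[OF assms assms] .
  from D_mult[OF this assms] have "((?y * ?y) mod (n1*n2) * ?y) mod (n1*n2) \<in> DD (((a+a) mod 6 + a) mod 6)" .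
  moreover have "((?y * ?y) mod (n1*n2) * ?y) mod (n1*n2) = (x^3) mod (n1*n2)"
    by (simp add: mod_mult_left_eq mod_mult_right_eq power3_eq_cube)
  ultimately show ?thesis by simp
qed

lemma sums:
  fixes \<beta> :: "'a::field"
  assumes b: "\<beta>^(n1*n2) = 1" "\<beta>^n1 \<noteq> 1" "\<beta>^n2 \<noteq> 1"
  shows "set_poly_eval N1 \<beta> = -1" "set_poly_eval (totatives (n1*n2)) \<beta> = 1"
proof -
  have N1s: "set_poly_eval N1 \<beta> = -1"
  proof -
    have inj: "inj_on (\<lambda>k. n1*k) {1..n2-1}" using n1ge by (auto intro: inj_onI)
    have "set_poly_eval N1 \<beta> = (\<Sum>k\<in>{1..n2-1}. \<beta>^(n1*k))"
      unfolding set_poly_eval_def N1_eq using sum.reindex[OF inj, of "\<lambda>y. \<beta>^y"] by simp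
    also have "\<dots> = (\<Sum>k\<in>{1..n2-1}. (\<beta>^n1)^k)" by (simp add: power_mult)
    also have "\<dots> = -1" using b n2ge by (intro geom_m1) (auto simp: power_mult[symmetric])
    finally show ?thesis .
  qed
  have N2s: "set_poly_eval N2 \<beta> = -1"
  proof -
    have inj: "inj_on (\<lambda>k. n2*k) {1..n1-1}" using n2ge by (auto intro: inj_onI)
    have eq: "N2 = (\<lambda>k. n2*k) ` {1..n1-1}" unfolding N2_def by auto
    have "set_poly_eval N2 \<beta> = (\<Sum>k\<in>{1..n1-1}. \<beta>^(n2*k))"
      unfolding set_poly_eval_def eq using sum.reindex[OF inj, of "\<lambda>y. \<beta>^y"] by simp
    also have "\<dots> = (\<Sum>k\<in>{1..n1-1}. (\<beta>^n2)^k)" by (simp add: power_mult)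
    also have "\<dots> = -1" using b n1ge by (intro geom_m1) (auto simp: power_mult[symmetric] mult.commute)
    finally show ?thesis .
  qed
  have bne: "\<beta> \<noteq> 1" using b(2) by auto
  have all: "set_poly_eval {1..<n1*n2} \<beta> = -1"
  proof -
    have "{1..<n1*n2} = {1..n1*n2-1}" by auto
    thus ?thesis unfolding set_poly_eval_def using geom_m1[OF b(1) bne] n1ge n2ge by simp
  qed
  have ft: "finite (totatives (n1*n2))" by simp
  have "set_poly_eval {1..<n1*n2} \<beta> = set_poly_eval (totatives (n1*n2)) \<beta> + set_poly_eval N1 \<beta> + set_poly_eval N2 \<beta>"
    unfolding split_units set_poly_eval_def
  proof -
    have d1: "totatives (n1*n2) \<inter> N1 = {}" "(totatives (n1*n2) \<union> N1) \<inter> N2 = {}"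
      using N1_tot N2_tot N12 by blast+
    show "sum ((^) \<beta>) (totatives (n1 * n2) \<union> N1 \<union> N2) =
        sum ((^) \<beta>) (totatives (n1 * n2)) + sum ((^) \<beta>) N1 + sum ((^) \<beta>) N2"
      using N1_fin N2_fin ft by (simp add: sum.union_disjoint[OF _ _ d1(2)] sum.union_disjoint[OF _ _ d1(1)])
  qed
  thus "set_poly_eval (totatives (n1*n2)) \<beta> = 1" using all N1s N2s by (simp add: algebra_simps)
  show "set_poly_eval N1 \<beta> = -1" by (rule N1s)
qed

lemma decomp4:
  assumes "a<6" "b<6" "d<6" "a\<noteq>b" "a\<noteq>d" "b\<noteq>d"
  shows "set_poly_eval (N1 \<union> DD a \<union> DD b \<union> DD d) \<beta> =
    set_poly_eval N1 \<beta> + set_poly_eval (DD a) \<beta> + set_poly_eval (DD b) \<beta> + set_poly_eval (DD d) \<beta>"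
  unfolding set_poly_eval_def using assms
  by (simp add: sum.union_disjoint Int_Un_distrib2 N1_fin D_fin N1_D D_disj)

lemma decomp6:
  "set_poly_eval (totatives (n1*n2)) \<beta> = set_poly_eval (DD 0) \<beta> + set_poly_eval (DD 1) \<beta>
    + set_poly_eval (DD 2) \<beta> + set_poly_eval (DD 3) \<beta> + set_poly_eval (DD 4) \<beta> + set_poly_eval (DD 5) \<beta>"
  unfolding set_poly_eval_def D_cover
  by (simp add: sum.union_disjoint Int_Un_distrib2 D_fin D_disj)

end
theorem lemma5:
  fixes n1 n2 g u q m :: nat and \<alpha> :: "'a::{field,finite}"
  defines "n \<equiv> n1 * n2"
  defines "D \<equiv> whiteman_class n1 n2 g u"
  defines "N1 \<equiv> {n1 * k | k. 1 \<le> k \<and> k \<le> n2 - 1}"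
  defines "\<beta> \<equiv> \<alpha> ^ ((q ^ m - 1) div n)"
  defines "S \<equiv> set_poly_eval (N1 \<union> D 0 \<union> D 1 \<union> D 2) \<beta>"
  defines "T \<equiv> set_poly_eval (N1 \<union> D 1 \<union> D 2 \<union> D 3) \<beta>"
  defines "M \<equiv> set_poly_eval (N1 \<union> D 2 \<union> D 3 \<union> D 4) \<beta>"
  assumes "prime n1" and "prime n2" and "odd n1" and "odd n2" and "n1 \<noteq> n2"
    and "gcd (n1 - 1) (n2 - 1) = 6"
    and "residue_primroot n1 g" and "residue_primroot n2 g"
    and "[u = g] (mod n1)" and "[u = 1] (mod n2)"
    and "prime_power q" and "coprime q n"
    and "m = ord n q"
    and "card (UNIV :: 'a set) = q ^ m"
    and "primitive_element \<alpha>"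
  shows "(q mod n \<in> D 1 \<union> D 3 \<union> D 5 \<longrightarrow>
            S \<notin> {-1, 0} \<and> T \<notin> {-1, 0} \<and> M \<notin> {-1, 0})
       \<and> (q mod n \<in> D 0 \<longrightarrow> S ^ q = S \<and> T ^ q = T \<and> M ^ q = M)
       \<and> (q mod n \<in> D 2 \<union> D 4 \<longrightarrow>
            S ^ (q ^ 3) = S \<and> T ^ (q ^ 3) = T \<and> M ^ (q ^ 3) = M)"
proof -
  interpret W: wh n1 n2 g u
    using \<open>prime n1\<close> \<open>prime n2\<close> \<open>n1 \<noteq> n2\<close> \<open>gcd (n1 - 1) (n2 - 1) = 6\<close>
      \<open>residue_primroot n1 g\<close> \<open>residue_primroot n2 g\<close> \<open>[u = g] (mod n1)\<close> \<open>[u = 1] (mod n2)\<close>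
    by unfold_locales auto
  have DD: "D = whiteman_class n1 n2 g u" unfolding D_def ..
  have NN: "N1 = W.N1" unfolding N1_def W.N1_def ..
  have nn: "n = n1*n2" unfolding n_def ..
  have n1: "n > 1" using W.n1ge W.n2ge unfolding nn by (simp add: one_less_mult)
  have card: "card (UNIV :: 'a set) = q ^ m" by fact
  have qm: "[q^m = 1] (mod n)" using ord_works[of q n] \<open>m = ord n q\<close> by simp
  have mpos: "m > 0"
  proof (rule ccontr)
    assume "\<not> m > 0" hence "card (UNIV :: 'a set) = 1" using card by simp
    thus False using ff_card_ge2[where 'a='a] by simp
  qed
  have qm2: "q^m \<ge> 2" using card ff_card_ge2[where 'a='a] by simp
  have "n dvd q^m - 1" using qm by (rule cong_to_1_nat)
  then obtain d where qd: "q^m - 1 = n * d" by (auto elim: dvdE)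
  have dpos: "d > 0" using qd qm2 by (cases "d = 0") auto
  have qdiv: "(q^m - 1) div n = d" using qd n1 by simp
  have an0: "\<alpha> \<noteq> 0" using \<open>primitive_element \<alpha>\<close> unfolding primitive_element_def by simp
  have bd: "\<beta> = \<alpha> ^ d" unfolding \<beta>_def qdiv ..
  have bn: "\<beta> ^ (n1*n2) = 1"
  proof -
    have "\<beta> ^ (n1*n2) = \<alpha> ^ (card (UNIV :: 'a set) - 1)" unfolding bd card qd nn
      by (simp add: power_mult[symmetric] mult.commute)
    thus ?thesis using ff_pow_card1[OF an0] by simp
  qed
  have bn1: "\<beta> ^ n1 \<noteq> 1"
  proof
    assume "\<beta> ^ n1 = 1"
    hence "\<alpha> ^ (d*n1) = 1" unfolding bd by (simp add: power_mult)
    hence "card (UNIV :: 'a set) - 1 \<le> d*n1" using prim_order[OF \<open>primitive_element \<alpha>\<close>] dpos W.n1ge by simp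
    hence "n1*n2*d \<le> d*n1" using card qd nn by simp
    thus False using dpos W.n1ge W.n2ge by simp
  qed
  have bn2: "\<beta> ^ n2 \<noteq> 1"
  proof
    assume "\<beta> ^ n2 = 1"
    hence "\<alpha> ^ (d*n2) = 1" unfolding bd by (simp add: power_mult)
    hence "card (UNIV :: 'a set) - 1 \<le> d*n2" using prim_order[OF \<open>primitive_element \<alpha>\<close>] dpos W.n2ge by simp
    hence "n1*n2*d \<le> d*n2" using card qd nn by simp
    thus False using dpos W.n1ge W.n2ge by simp
  qed
  have fr: "\<And>B j. set_poly_eval B \<beta> ^ (q^j) = (\<Sum>i\<in>B. (\<beta>^i)^(q^j))"
    unfolding set_poly_eval_def by (rule frob_sum[OF \<open>prime_power q\<close> card mpos])
  have fr1: "\<And>B. set_poly_eval B \<beta> ^ q = (\<Sum>i\<in>B. (\<beta>^i)^q)" using fr[where j=1] by simp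
  have sN1: "set_poly_eval W.N1 \<beta> = -1" and sT: "set_poly_eval (totatives (n1*n2)) \<beta> = 1"
    using W.sums[OF bn bn1 bn2] by auto
  have q3pos: "q^3 > 0" using qm2 mpos by (cases "q = 0") (auto simp: zero_power)
  have m1: "(-1::'a) ^ (q^3) = -1"
  proof -
    have "((1::'a) + -1) ^ (q^(3::nat)) = 1 ^ (q^3) + (-1) ^ (q^3)" by (rule frob_add[OF \<open>prime_power q\<close> card mpos])
    moreover have "(0::'a) ^ (q^3) = 0" by (rule zero_power[OF q3pos])
    ultimately show ?thesis by (simp add: eq_neg_iff_add_eq_0 add.commute)
  qed
  have key: "X \<notin> {-1, 0}" if "X + X ^ (q^3) = -1" for X :: 'a
  proof
    assume "X \<in> {-1, 0}"
    hence "X = -1 \<or> X = 0" by simp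
    thus False
    proof
      assume "X = -1"
      hence "-1 + (-1::'a) = -1 + 0" using that m1 by simp
      hence "(-1::'a) = 0" by (rule add_left_imp_eq)
      thus False by simp
    next
      assume X0: "X = 0"
      have z: "(0::'a) ^ (q^3) = 0" by (rule zero_power[OF q3pos])
      have "(0::'a) + 0 = -1" using that unfolding X0 z .
      thus False by simp
    qed
  qed
  have S_def': "S = set_poly_eval (W.N1 \<union> W.DD 0 \<union> W.DD 1 \<union> W.DD 2) \<beta>" unfolding S_def NN DD ..
  have T_def': "T = set_poly_eval (W.N1 \<union> W.DD 1 \<union> W.DD 2 \<union> W.DD 3) \<beta>" unfolding T_def NN DD ..
  have M_def': "M = set_poly_eval (W.N1 \<union> W.DD 2 \<union> W.DD 3 \<union> W.DD 4) \<beta>" unfolding M_def NN DD ..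
  have qmod: "q mod n = q mod (n1*n2)" unfolding nn ..
  have I: "S \<notin> {-1, 0} \<and> T \<notin> {-1, 0} \<and> M \<notin> {-1, 0}" if h: "q mod n \<in> D 1 \<union> D 3 \<union> D 5"
  proof -
    have c3: "(q^3) mod (n1*n2) \<in> W.DD 3"
      using h unfolding DD qmod by (auto dest: W.cube)
    have frq: "\<And>B. set_poly_eval B \<beta> ^ (q^3) = (\<Sum>i\<in>B. (\<beta>^i)^(q^3))" by (rule fr)
    have S3: "S ^ (q^3) = set_poly_eval (W.N1 \<union> W.DD 3 \<union> W.DD 4 \<union> W.DD 5) \<beta>"
      unfolding S_def' using W.frob_img[OF bn c3 refl frq] by simp
    have T3: "T ^ (q^3) = set_poly_eval (W.N1 \<union> W.DD 4 \<union> W.DD 5 \<union> W.DD 0) \<beta>"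
      unfolding T_def' using W.frob_img[OF bn c3 refl frq] by simp
    have M3: "M ^ (q^3) = set_poly_eval (W.N1 \<union> W.DD 5 \<union> W.DD 0 \<union> W.DD 1) \<beta>"
      unfolding M_def' using W.frob_img[OF bn c3 refl frq] by simp
    have six: "set_poly_eval (W.DD 0) \<beta> + set_poly_eval (W.DD 1) \<beta> + set_poly_eval (W.DD 2) \<beta>
       + set_poly_eval (W.DD 3) \<beta> + set_poly_eval (W.DD 4) \<beta> + set_poly_eval (W.DD 5) \<beta> = 1"
      using trans[OF W.decomp6[symmetric] sT] .
    have "S + S ^ (q^3) = -1" unfolding S3 unfolding S_def'
      using six sN1 by (simp add: W.decomp4 algebra_simps)
    moreover have "T + T ^ (q^3) = -1" unfolding T3 unfolding T_def'
      using six sN1 by (simp add: W.decomp4 algebra_simps)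
    moreover have "M + M ^ (q^3) = -1" unfolding M3 unfolding M_def'
      using six sN1 by (simp add: W.decomp4 algebra_simps)
    ultimately show ?thesis using key by blast
  qed
  have II: "S ^ q = S \<and> T ^ q = T \<and> M ^ q = M" if h: "q mod n \<in> D 0"
  proof -
    have c0: "q mod (n1*n2) \<in> W.DD 0" using h unfolding DD qmod .
    show ?thesis unfolding S_def' T_def' M_def'
      using W.frob_img[OF bn c0 refl fr1] by simp
  qed
  have III: "S ^ (q^3) = S \<and> T ^ (q^3) = T \<and> M ^ (q^3) = M" if h: "q mod n \<in> D 2 \<union> D 4"
  proof -
    have c0: "(q^3) mod (n1*n2) \<in> W.DD 0"
      using h unfolding DD qmod by (auto dest: W.cube)
    have frq: "\<And>B. set_poly_eval B \<beta> ^ (q^3) = (\<Sum>i\<in>B. (\<beta>^i)^(q^3))" by (rule fr)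
    show ?thesis unfolding S_def' T_def' M_def'
      using W.frob_img[OF bn c0 refl frq] by simp
  qed
  show ?thesis using I II III by blast
qed

end
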